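(* Consider the repeated single-slot hybrid auction in which at each step $t$ each advertiser $j$ bids $(m_{jt},c_{jt})$, the auctioneer's index is $q_{jt}$, the effective bid is $R_{jt}=\max(m_{jt},c_{jt}q_{jt})$, the highest effective bid wins and pays (with $R_{-j}$ the highest competing effective bid) $R_{-j}$ per impression if $m_{jt}>c_{jt}q_{jt}$ and $R_{-j}/q_{jt}$ per click otherwise. Advertiser $j$ has per-click value $v_j$, and the advertiser and auctioneer share the same Bayes-updated prior $\mathcal{P}_{jt}=\mathcal{Q}_{jt}$ on $j$'s click-through rate, with mean $p_{jt}$; the auctioneer's index $q_{jt}$ is the Gittins index of $\mathcal{Q}_{jt}$ with discount factor $\gamma_a$. Each advertiser uses the bidding index strategy with discount factor $\gamma_b$: at each step it bids $(B_{jt},B_{jt}/p_{jt})$, where $B_{jt}=\mathcal{W}_{jt}\min(1,p_{jt}/q_{jt})$ and $\mathcal{W}_{jt}$ is the largest $W$ such that the following game has positive optimal expected $\gamma_b$-discounted value: starting from the current priors, at each step the advertiser may stop or continue, and if it continues it gains $v_jp_s-W\min(1,p_s/q_s)$ in expectation (with $p_s,q_s$ the current mean and auctioneer index), after which both priors are Bayes-updated with the click outcome. Let $\gamma\in[0,1)$ be a global discount factor, let $G_{jt}$ denote the Gittins index of $\mathcal{P}_{jt}$ with discount factor $\gamma$, and call socially optimal the allocation rule maximizing the infinite-horizon expected $\gamma$-discounted sum of $v_jp_{jt}$ over the advertisers $j$ receiving the impression at each step $t$, which gives the impression at each step to an advertiser with the highest $v_jG_{jt}$. Then the bidding index strategy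 implements the socially optimal solution (each advertiser's effective bid equals $v_jG_{jt}$) in each of the following two cases: (1) $\gamma_b=\gamma$ and $\gamma_a=0$; (2) $\gamma_b=0$ and $\gamma_a=\gamma$.
   Context: Gittins index of a prior $\mathcal{Q}$ with discount factor $\gamma$: for a coin whose head probability has prior $\mathcal{Q}$ (Bayes-updated after each toss), yielding reward $1$ on heads and charged $G$ per toss, with the option to retire at any time, it is the largest $G$ for which the optimal expected $\gamma$-discounted difference between rewards and charges is non-negative. It equals the mean when $\gamma=0$ and is at least the mean in general. *)

theory Defs
  imports "HOL-Probability.Probability"
begin

text \<open>Priors on the click-through rate are probability measures on the reals
  concentrated on [0,1].  A click outcome is a bool (True = click).\<close>

definition lik :: "bool \<Rightarrow> real \<Rightarrow> real" where
  "lik b \<theta> = (if b then \<theta> else 1 - \<theta>)"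

definition hlik :: "bool list \<Rightarrow> real \<Rightarrow> real" where
  "hlik h \<theta> = prod_list (map (\<lambda>b. lik b \<theta>) h)"

definition hprob :: "real measure \<Rightarrow> bool list \<Rightarrow> real" where
  "hprob Q h = (\<integral>\<theta>. hlik h \<theta> \<partial>Q)"

definition bayes :: "real measure \<Rightarrow> bool \<Rightarrow> real measure" where
  "bayes Q b = density Q (\<lambda>\<theta>. ennreal (lik b \<theta> / (\<integral>x. lik b x \<partial>Q)))"

definition posterior :: "real measure \<Rightarrow> bool list \<Rightarrow> real measure" where
  "posterior Q h = fold (\<lambda>b P. bayes P b) h Q"

definition ctr_mean :: "real measure \<Rightarrow> real" where
  "ctr_mean Q = (\<integral>\<theta>. \<theta> \<partial>Q)"

text \<open>A (history-dependent) stopping policy: sigma h says whether to continue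
  (play the step) after outcome history h. Step length(h) is played iff the policy
  continued at all prefixes of h.\<close>
definition plays :: "(bool list \<Rightarrow> bool) \<Rightarrow> bool list \<Rightarrow> bool" where
  "plays \<sigma> h = (\<forall>i\<le>length h. \<sigma> (take i h))"

definition policy_value ::
  "real \<Rightarrow> (real measure \<Rightarrow> real) \<Rightarrow> real measure \<Rightarrow> (bool list \<Rightarrow> bool) \<Rightarrow> real" where
  "policy_value \<gamma> r Q \<sigma> =
     (\<Sum>t. \<gamma> ^ t * (\<Sum>h\<in>{h::bool list. length h = t}.
        (if plays \<sigma> h then hprob Q h * r (posterior Q h) else 0)))"

text \<open>Optimal value with the option to stop at any time (including immediately).\<close>
definition opt_value :: "real \<Rightarrow> (real measure \<Rightarrow> real) \<Rightarrow> real measure \<Rightarrow> real" where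
  "opt_value \<gamma> r Q = (SUP \<sigma>. policy_value \<gamma> r Q \<sigma>)"

text \<open>Gittins index: largest charge G such that the optimal value of tossing the coin
  (first toss made, retirement possible at any later time) is non-negative.\<close>
definition gittins :: "real \<Rightarrow> real measure \<Rightarrow> real" where
  "gittins \<gamma> Q = Sup {G. (SUP \<sigma>\<in>{\<sigma>. \<sigma> []}. policy_value \<gamma> (\<lambda>P. ctr_mean P - G) Q \<sigma>) \<ge> 0}"

definition bidding_W :: "real \<Rightarrow> real \<Rightarrow> real \<Rightarrow> real measure \<Rightarrow> real" where
  "bidding_W \<gamma>a \<gamma>b v Q = Sup {W. opt_value \<gamma>b
      (\<lambda>P. v * ctr_mean P - W * min 1 (ctr_mean P / gittins \<gamma>a P)) Q > 0}"

definition bidding_index_bid :: "real \<Rightarrow> real \<Rightarrow> real \<Rightarrow> real measure \<Rightarrow> real \<times> real" where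
  "bidding_index_bid \<gamma>a \<gamma>b v Q =
     (let B = bidding_W \<gamma>a \<gamma>b v Q * min 1 (ctr_mean Q / gittins \<gamma>a Q)
      in (B, B / ctr_mean Q))"

definition effective_bid :: "real \<times> real \<Rightarrow> real \<Rightarrow> real" where
  "effective_bid mc q = max (fst mc) (snd mc * q)"

end

theory Submission
  imports Defs
begin

lemma hlik_Nil[simp]: "hlik [] \<theta> = 1" by (simp add: hlik_def)
lemma hlik_Cons[simp]: "hlik (c # h) \<theta> = lik c \<theta> * hlik h \<theta>" by (simp add: hlik_def)
lemma hlik_append: "hlik (h @ h') \<theta> = hlik h \<theta> * hlik h' \<theta>" by (simp add: hlik_def)
lemma hlik_snoc: "hlik (h @ [c]) \<theta> = hlik h \<theta> * lik c \<theta>" by (simp add: hlik_def)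
lemma hlik_snocT: "hlik (h @ [True]) \<theta> = hlik h \<theta> * \<theta>" by (simp add: hlik_def lik_def)

lemma lik_range: "0 \<le> \<theta> \<Longrightarrow> \<theta> \<le> 1 \<Longrightarrow> 0 \<le> lik c \<theta> \<and> lik c \<theta> \<le> 1"
  by (auto simp: lik_def)

lemma hlik_range: "0 \<le> \<theta> \<Longrightarrow> \<theta> \<le> 1 \<Longrightarrow> 0 \<le> hlik h \<theta> \<and> hlik h \<theta> \<le> 1"
proof (induction h)
  case Nil then show ?case by simp
next
  case (Cons c h)
  then show ?case using lik_range[of \<theta> c] by (auto intro: mult_le_one)
qed

lemma lik_meas[measurable]: "lik c \<in> borel_measurable borel"
proof -
  have "lik c = (\<lambda>\<theta>. if c then \<theta> else 1 - \<theta>)" by (auto simp: lik_def fun_eq_iff)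
  then show ?thesis by simp
qed

lemma hlik_meas[measurable]: "hlik h \<in> borel_measurable borel"
proof (induction h)
  case Nil
  have "hlik [] = (\<lambda>_. 1)" by (auto simp: fun_eq_iff)
  then show ?case by simp
next
  case (Cons c h)
  have "hlik (c # h) = (\<lambda>\<theta>. lik c \<theta> * hlik h \<theta>)" by (auto simp: fun_eq_iff)
  then show ?case using Cons by simp
qed

lemma sum_len_Suc:
  "(\<Sum>h\<in>{h::bool list. length h = Suc t}. F h) =
   (\<Sum>h\<in>{h::bool list. length h = t}. F (True # h) + F (False # h))"
proof -
  let ?L = "{h::bool list. length h = t}"
  have e: "{h::bool list. length h = Suc t} = (Cons True) ` ?L \<union> (Cons False) ` ?L"
  proof
    show "{h::bool list. length h = Suc t} \<subseteq> (Cons True) ` ?L \<union> (Cons False) ` ?L"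
    proof
      fix h :: "bool list" assume "h \<in> {h. length h = Suc t}"
      then obtain c xs where "h = c # xs" "length xs = t" by (auto simp: length_Suc_conv)
      then show "h \<in> (Cons True) ` ?L \<union> (Cons False) ` ?L" by (cases c) auto
    qed
  qed auto
  have "(\<Sum>h\<in>{h::bool list. length h = Suc t}. F h) = sum F (Cons True ` ?L) + sum F (Cons False ` ?L)"
    unfolding e by (rule sum.union_disjoint) (auto simp: finite_list_length)
  also have "\<dots> = (\<Sum>h\<in>?L. F (True#h)) + (\<Sum>h\<in>?L. F (False#h))"
    by (simp add: sum.reindex)
  finally show ?thesis by (simp add: sum.distrib)
qed

lemma len0: "{h::bool list. length h = 0} = {[]}" by auto

lemma sum_hlik: "(\<Sum>h\<in>{h::bool list. length h = t}. hlik h \<theta>) = 1"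
proof (induction t)
  case 0 then show ?case by (simp add: len0)
next
  case (Suc t)
  have "(\<Sum>h\<in>{h::bool list. length h = Suc t}. hlik h \<theta>) =
        (\<Sum>h\<in>{h::bool list. length h = t}. hlik h \<theta>)"
    by (simp add: sum_len_Suc lik_def algebra_simps)
  then show ?case using Suc by simp
qed

lemma plays_Nil[simp]: "plays \<sigma> [] = \<sigma> []" by (simp add: plays_def)
lemma plays_first: assumes "plays \<sigma> h" shows "\<sigma> []"
proof -
  have "\<sigma> (take 0 h)" using assms unfolding plays_def by blast
  then show ?thesis by simp
qed
lemma plays_single: "plays (\<lambda>h. h = []) h \<longleftrightarrow> h = []"
proof
  assume "plays (\<lambda>h. h = []) h"
  then have "take (length h) h = []" unfolding plays_def by blast
  then show "h = []" by simp
qed (simp add: plays_def)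

lemma posterior_Nil[simp]: "posterior P [] = P" by (simp add: posterior_def)
lemma post_snoc: "posterior Q (h @ [c]) = bayes (posterior Q h) c" by (simp add: posterior_def)

lemma pv0: "policy_value 0 r P \<sigma> = (if \<sigma> [] then hprob P [] * r P else 0)"
proof -
  have "policy_value 0 r P \<sigma> = (\<Sum>t\<in>{0}. (0::real) ^ t * (\<Sum>h\<in>{h::bool list. length h = t}.
        (if plays \<sigma> h then hprob P h * r (posterior P h) else 0)))"
    unfolding policy_value_def by (rule suminf_finite) auto
  then show ?thesis by (simp add: len0)
qed

lemma gittins0: assumes "hprob P [] = 1" shows "gittins 0 P = ctr_mean P"
proof -
  have "gittins 0 P = Sup {G. (SUP \<sigma>\<in>{\<sigma>::bool list \<Rightarrow> bool. \<sigma> []}. ctr_mean P - G) \<ge> 0}"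
    unfolding gittins_def by (simp add: pv0 assms)
  also have "\<dots> = Sup {..ctr_mean P}"
  proof -
    have "(\<lambda>_. True) \<in> {\<sigma>::bool list \<Rightarrow> bool. \<sigma> []}" by simp
    then have "{\<sigma>::bool list \<Rightarrow> bool. \<sigma> []} \<noteq> {}" by blast
    then have "{G. (SUP \<sigma>\<in>{\<sigma>::bool list \<Rightarrow> bool. \<sigma> []}. ctr_mean P - G) \<ge> 0} = {..ctr_mean P}"
      by (auto simp: cSUP_const)
    then show ?thesis by simp
  qed
  finally show ?thesis by simp
qed


definition S :: "(bool list \<Rightarrow> bool) \<Rightarrow> (bool list \<Rightarrow> real) \<Rightarrow> nat \<Rightarrow> real" where
  "S \<sigma> x t = (\<Sum>h\<in>{h::bool list. length h = t}. if plays \<sigma> h then x h else 0)"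

definition PV :: "real \<Rightarrow> (bool list \<Rightarrow> bool) \<Rightarrow> (bool list \<Rightarrow> real) \<Rightarrow> real" where
  "PV g \<sigma> x = (\<Sum>t. g ^ t * S \<sigma> x t)"

lemma pv_eq: "policy_value g r Q \<sigma> = PV g \<sigma> (\<lambda>h. hprob Q h * r (posterior Q h))"
  by (simp add: policy_value_def PV_def S_def)

lemma PV_not: assumes "\<not> \<sigma> []" shows "PV g \<sigma> x = 0"
proof -
  have "\<And>h. \<not> plays \<sigma> h" using plays_first assms by blast
  then show ?thesis unfolding PV_def S_def by simp
qed

lemma PV_single: "PV g (\<lambda>h. h = []) x = x []"
proof -
  have "PV g (\<lambda>h. h = []) x = (\<Sum>t\<in>{0}. g ^ t * S (\<lambda>h. h = []) x t)"
    unfolding PV_def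
  proof (rule suminf_finite)
    fix n :: nat assume "n \<notin> {0}"
    then have "S (\<lambda>h. h = []) x n = 0" unfolding S_def plays_single by (intro sum.neutral) auto
    then show "g ^ n * S (\<lambda>h. h = []) x n = 0" by simp
  qed auto
  then show ?thesis by (simp add: S_def len0)
qed

locale ctr = prob_space Q for Q :: "real measure" +
  assumes sb: "sets Q = sets borel" and ae01: "AE \<theta> in Q. 0 \<le> \<theta> \<and> \<theta> \<le> 1"
begin

lemma mQ: "borel_measurable Q = borel_measurable borel"
  using measurable_cong_sets[OF sb refl] .

lemma AE_hlik: "AE \<theta> in Q. 0 \<le> hlik h \<theta> \<and> hlik h \<theta> \<le> 1"
  using ae01 by (rule eventually_mono) (simp add: hlik_range)

lemma int_hlik: "integrable Q (hlik h)"
proof (rule integrable_const_bound[where B=1])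
  show "AE x in Q. norm (hlik h x) \<le> 1" using AE_hlik[of h] by eventually_elim auto
qed (simp add: mQ)

lemma int_hlikT: "integrable Q (\<lambda>\<theta>. hlik h \<theta> * \<theta>)"
proof (rule integrable_const_bound[where B=1])
  show "AE x in Q. norm (hlik h x * x) \<le> 1"
    using AE_hlik[of h] ae01 by eventually_elim (auto simp: abs_mult intro: mult_le_one)
qed (simp add: mQ)

definition B where "B h = hprob Q h"
definition A where "A h = hprob Q (h @ [True])"
definition C where "C h = (if A h = 0 then 0 else B h)"

lemma A_eq: "A h = (\<integral>\<theta>. hlik h \<theta> * \<theta> \<partial>Q)" by (simp add: A_def hprob_def hlik_snocT)
lemma B_eq: "B h = (\<integral>\<theta>. hlik h \<theta> \<partial>Q)" by (simp add: B_def hprob_def)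

lemma B_nonneg: "0 \<le> B h"
proof -
  have "AE x in Q. 0 \<le> hlik h x" using AE_hlik[of h] by eventually_elim auto
  then show ?thesis unfolding B_eq by (rule integral_nonneg_AE)
qed
lemma B_Nil: "B [] = 1" by (simp add: B_eq prob_space)
lemma A_nonneg: "0 \<le> A h"
proof -
  have "AE x in Q. 0 \<le> hlik h x * x" using AE_hlik[of h] ae01 by eventually_elim auto
  then show ?thesis unfolding A_eq by (rule integral_nonneg_AE)
qed
lemma A_le_B: "A h \<le> B h"
proof -
  have "AE x in Q. hlik h x * x \<le> hlik h x" using AE_hlik[of h] ae01 by eventually_elim (auto intro: mult_left_le)
  then show ?thesis unfolding A_eq B_eq by (intro integral_mono_AE int_hlik int_hlikT)
qed
lemma A_mono: "A (h @ h') \<le> A h"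
  unfolding A_eq
proof (intro integral_mono_AE int_hlikT)
  show "AE x in Q. hlik (h @ h') x * x \<le> hlik h x * x"
    using AE_hlik[of h] AE_hlik[of h'] ae01
  proof eventually_elim
    case (elim x)
    have "hlik h x * x * hlik h' x \<le> hlik h x * x" using elim by (intro mult_left_le) auto
    then show ?case by (simp add: hlik_append mult_ac)
  qed
qed
lemma B_snoc: "B (h @ [c]) \<le> B h"
  unfolding B_eq
proof (intro integral_mono_AE int_hlik)
  show "AE x in Q. hlik (h @ [c]) x \<le> hlik h x"
    using AE_hlik[of h] ae01
  proof eventually_elim
    case (elim x)
    then show ?case using lik_range[of x c] by (simp add: hlik_snoc mult_left_le)
  qed
qed

lemma sum_B: "(\<Sum>h\<in>{h::bool list. length h = t}. B h) = 1"
proof -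
  have "(\<Sum>h\<in>{h::bool list. length h = t}. B h) = (\<integral>\<theta>. (\<Sum>h\<in>{h::bool list. length h = t}. hlik h \<theta>) \<partial>Q)"
    unfolding B_eq by (rule Bochner_Integration.integral_sum[symmetric]) (simp add: int_hlik)
  also have "\<dots> = 1" by (simp add: sum_hlik prob_space)
  finally show ?thesis .
qed

lemma post_density: "0 < B h \<Longrightarrow> posterior Q h = density Q (\<lambda>\<theta>. ennreal (hlik h \<theta> / B h))"
proof (induction h rule: rev_induct)
  case Nil
  then show ?case by (simp add: B_Nil density_1)
next
  case (snoc c h)
  have Bh: "0 < B h" using snoc.prems B_snoc[of h c] by linarith
  define g where "g = (\<lambda>\<theta>. hlik h \<theta> / B h)"
  have gm[measurable]: "g \<in> borel_measurable borel" unfolding g_def by simp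
  have g0: "AE \<theta> in Q. 0 \<le> g \<theta>" using AE_hlik[of h] by eventually_elim (auto simp: g_def B_nonneg)
  have m1: "(\<lambda>\<theta>. ennreal (g \<theta>)) \<in> borel_measurable Q" unfolding mQ by measurable
  have m2: "(\<lambda>\<theta>. ennreal (lik c \<theta> / (B (h@[c]) / B h))) \<in> borel_measurable Q" unfolding mQ by measurable
  have m3: "(\<lambda>\<theta>. ennreal (hlik (h@[c]) \<theta> / B (h@[c]))) \<in> borel_measurable Q" unfolding mQ by measurable
  have m4: "(\<lambda>\<theta>. ennreal (g \<theta>) * ennreal (lik c \<theta> / (B (h@[c]) / B h))) \<in> borel_measurable Q" unfolding mQ by measurable
  have IH: "posterior Q h = density Q (\<lambda>\<theta>. ennreal (g \<theta>))" using snoc.IH[OF Bh] by (simp add: g_def)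
  have "(\<integral>x. lik c x \<partial>density Q (\<lambda>\<theta>. ennreal (g \<theta>))) = (\<integral>x. g x * lik c x \<partial>Q)"
    using integral_density[of "lik c" Q g] g0 unfolding mQ by simp
  also have "\<dots> = (\<integral>x. hlik h x * lik c x / B h \<partial>Q)" by (simp add: g_def)
  also have "\<dots> = B (h@[c]) / B h" by (simp add: B_eq hlik_snoc)
  finally have N: "(\<integral>x. lik c x \<partial>density Q (\<lambda>\<theta>. ennreal (g \<theta>))) = B (h@[c]) / B h" .
  have "posterior Q (h@[c]) = density (density Q (\<lambda>\<theta>. ennreal (g \<theta>))) (\<lambda>\<theta>. ennreal (lik c \<theta> / (B (h@[c]) / B h)))"
    by (simp add: post_snoc IH bayes_def N)
  also have "\<dots> = density Q (\<lambda>\<theta>. ennreal (g \<theta>) * ennreal (lik c \<theta> / (B (h@[c]) / B h)))"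
    by (rule density_density_eq[OF m1 m2])
  also have "\<dots> = density Q (\<lambda>\<theta>. ennreal (hlik (h@[c]) \<theta> / B (h@[c])))"
  proof (rule density_cong)
    show "AE x in Q. ennreal (g x) * ennreal (lik c x / (B (h @ [c]) / B h)) = ennreal (hlik (h @ [c]) x / B (h @ [c]))"
      using AE_hlik[of h] ae01
    proof eventually_elim
      case (elim x)
      have l: "0 \<le> lik c x" using lik_range[of x c] elim by auto
      have "ennreal (g x) * ennreal (lik c x / (B (h @ [c]) / B h)) = ennreal (g x * (lik c x / (B (h @ [c]) / B h)))"
        using elim l Bh B_nonneg[of "h@[c]"] by (intro ennreal_mult[symmetric]) (auto simp: g_def)
      also have "g x * (lik c x / (B (h @ [c]) / B h)) = hlik (h @ [c]) x / B (h @ [c])"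
        using Bh by (simp add: g_def hlik_snoc)
      finally show ?case .
    qed
  qed (fact m4, fact m3)
  finally show ?case .
qed

lemma post_props:
  assumes "0 < B h"
  shows "hprob (posterior Q h) [] = 1" "ctr_mean (posterior Q h) = A h / B h"
proof -
  have g0: "AE \<theta> in Q. 0 \<le> hlik h \<theta> / B h" using AE_hlik[of h] by eventually_elim (auto simp: B_nonneg)
  have "hprob (posterior Q h) [] = (\<integral>x. hlik h x / B h \<partial>Q)"
    unfolding post_density[OF assms] hprob_def by (subst integral_density) (auto simp: mQ g0)
  also have "\<dots> = 1" using assms by (simp add: B_eq[symmetric])
  finally show "hprob (posterior Q h) [] = 1" .
  have "ctr_mean (posterior Q h) = (\<integral>x. hlik h x / B h * x \<partial>Q)"
    unfolding post_density[OF assms] ctr_mean_def by (subst integral_density) (auto simp: mQ g0)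
  also have "\<dots> = (\<integral>x. hlik h x * x / B h \<partial>Q)" by simp
  also have "\<dots> = A h / B h" by (simp add: A_eq)
  finally show "ctr_mean (posterior Q h) = A h / B h" .
qed


definition dom :: "(bool list \<Rightarrow> real) \<Rightarrow> bool" where
  "dom x \<longleftrightarrow> (\<exists>K. \<forall>h. \<bar>x h\<bar> \<le> K * B h)"

lemma S_bound:
  assumes "\<And>h. \<bar>x h\<bar> \<le> K * B h"
  shows "\<bar>S \<sigma> x t\<bar> \<le> K"
proof -
  have "\<bar>x []\<bar> \<le> K" using assms[of "[]"] B_Nil by simp
  then have K0: "0 \<le> K" by (rule order_trans[OF abs_ge_zero])
  have "\<bar>S \<sigma> x t\<bar> \<le> (\<Sum>h\<in>{h::bool list. length h = t}. \<bar>if plays \<sigma> h then x h else 0\<bar>)"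
    unfolding S_def by (rule sum_abs)
  also have "\<dots> \<le> (\<Sum>h\<in>{h::bool list. length h = t}. K * B h)"
    by (rule sum_mono) (simp add: assms K0 B_nonneg)
  also have "\<dots> = K" by (simp add: sum_distrib_left[symmetric] sum_B)
  finally show ?thesis .
qed

lemma summ_abs:
  assumes g: "0 \<le> g" "g < 1" and x: "\<And>h. \<bar>x h\<bar> \<le> K * B h"
  shows "summable (\<lambda>t. \<bar>g ^ t * S \<sigma> x t\<bar>)" "\<And>t. \<bar>g ^ t * S \<sigma> x t\<bar> \<le> K * g ^ t"
proof -
  show b: "\<bar>g ^ t * S \<sigma> x t\<bar> \<le> K * g ^ t" for t
  proof -
    have "\<bar>g ^ t * S \<sigma> x t\<bar> = g ^ t * \<bar>S \<sigma> x t\<bar>" using g by (simp add: abs_mult)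
    also have "\<dots> \<le> g ^ t * K" using S_bound[OF x] g by (intro mult_left_mono) auto
    finally show ?thesis by (simp add: mult.commute)
  qed
  have "summable (\<lambda>t. K * g ^ t)" using g by (intro summable_mult summable_geometric) auto
  then show "summable (\<lambda>t. \<bar>g ^ t * S \<sigma> x t\<bar>)"
    by (rule summable_comparison_test') (use b in auto)
qed

lemma summ:
  assumes g: "0 \<le> g" "g < 1" and x: "dom x"
  shows "summable (\<lambda>t. g ^ t * S \<sigma> x t)"
proof -
  obtain K where "\<And>h. \<bar>x h\<bar> \<le> K * B h" using x unfolding dom_def by blast
  from summ_abs(1)[OF g this] show ?thesis by (rule summable_rabs_cancel)
qed

lemma PV_bound:
  assumes g: "0 \<le> g" "g < 1" and x: "\<And>h. \<bar>x h\<bar> \<le> K * B h"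
  shows "\<bar>PV g \<sigma> x\<bar> \<le> K / (1 - g)"
proof -
  have s: "summable (\<lambda>t. \<bar>g ^ t * S \<sigma> x t\<bar>)" by (rule summ_abs(1)[OF g x])
  have gs: "(\<lambda>t. K * g ^ t) sums (K * (1 / (1 - g)))"
    using g by (intro sums_mult geometric_sums) auto
  have "\<bar>PV g \<sigma> x\<bar> \<le> (\<Sum>t. \<bar>g ^ t * S \<sigma> x t\<bar>)" unfolding PV_def by (rule summable_rabs[OF s])
  also have "\<dots> \<le> (\<Sum>t. K * g ^ t)"
    by (rule suminf_le[OF summ_abs(2)[OF g x] s sums_summable[OF gs]])
  also have "\<dots> = K / (1 - g)" using sums_unique[OF gs] by simp
  finally show ?thesis .
qed

lemma S_lin: "S \<sigma> (\<lambda>h. \<alpha> * x h - \<beta> * y h) t = \<alpha> * S \<sigma> x t - \<beta> * S \<sigma> y t"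
  unfolding S_def sum_distrib_left sum_subtractf[symmetric] by (rule sum.cong) auto

lemma PV_diff:
  assumes g: "0 \<le> g" "g < 1" and x: "dom x" and y: "dom y"
  shows "PV g \<sigma> (\<lambda>h. \<alpha> * x h - \<beta> * y h) = \<alpha> * PV g \<sigma> x - \<beta> * PV g \<sigma> y"
proof -
  have "(\<lambda>t. g ^ t * S \<sigma> (\<lambda>h. \<alpha> * x h - \<beta> * y h) t) =
        (\<lambda>t. \<alpha> * (g ^ t * S \<sigma> x t) - \<beta> * (g ^ t * S \<sigma> y t))"
    by (simp add: S_lin algebra_simps)
  then have "PV g \<sigma> (\<lambda>h. \<alpha> * x h - \<beta> * y h) = (\<Sum>t. \<alpha> * (g ^ t * S \<sigma> x t) - \<beta> * (g ^ t * S \<sigma> y t))"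
    unfolding PV_def by simp
  also have "\<dots> = (\<Sum>t. \<alpha> * (g ^ t * S \<sigma> x t)) - (\<Sum>t. \<beta> * (g ^ t * S \<sigma> y t))"
    by (rule suminf_diff[symmetric]) (intro summable_mult summ[OF g x] summ[OF g y])+
  also have "\<dots> = \<alpha> * PV g \<sigma> x - \<beta> * PV g \<sigma> y"
    unfolding PV_def by (simp add: suminf_mult summ[OF g x] summ[OF g y])
  finally show ?thesis .
qed

lemma PV_mono:
  assumes g: "0 \<le> g" "g < 1" and x: "dom x" and y: "dom y" and le: "\<And>h. x h \<le> y h"
  shows "PV g \<sigma> x \<le> PV g \<sigma> y"
  unfolding PV_def
proof (rule suminf_le[OF _ summ[OF g x] summ[OF g y]])
  fix t
  have "S \<sigma> x t \<le> S \<sigma> y t" unfolding S_def by (rule sum_mono) (simp add: le)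
  then show "g ^ t * S \<sigma> x t \<le> g ^ t * S \<sigma> y t" using g by (intro mult_left_mono) auto
qed

lemma PV_nonneg:
  assumes g: "0 \<le> g" "g < 1" and x: "dom x" and nn: "\<And>h. 0 \<le> x h"
  shows "0 \<le> PV g \<sigma> x"
  unfolding PV_def
proof (rule suminf_nonneg[OF summ[OF g x]])
  fix t
  have "0 \<le> S \<sigma> x t" unfolding S_def by (rule sum_nonneg) (simp add: nn)
  then show "0 \<le> g ^ t * S \<sigma> x t" using g by simp
qed

lemma dom_A: "dom A" unfolding dom_def using A_le_B A_nonneg by (intro exI[of _ 1]) auto
lemma dom_B: "dom B" unfolding dom_def using B_nonneg by (intro exI[of _ 1]) auto
lemma dom_C: "dom C" unfolding dom_def using B_nonneg by (intro exI[of _ 1]) (auto simp: C_def)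

lemma PV_B_ge1:
  assumes g: "0 \<le> g" "g < 1" and s: "\<sigma> []"
  shows "1 \<le> PV g \<sigma> B"
proof -
  have nn: "0 \<le> g ^ t * S \<sigma> B t" for t
    using g unfolding S_def by (intro mult_nonneg_nonneg sum_nonneg) (auto simp: B_nonneg)
  have "sum (\<lambda>t. g ^ t * S \<sigma> B t) {0} \<le> PV g \<sigma> B"
    unfolding PV_def by (rule sum_le_suminf[OF summ[OF g dom_B]]) (auto simp: nn)
  then show ?thesis using s by (simp add: S_def len0 B_Nil)
qed

lemma PV_le_bound:
  assumes g: "0 \<le> g" "g < 1"
  shows "\<bar>PV g \<sigma> A\<bar> \<le> 1 / (1 - g)" "\<bar>PV g \<sigma> B\<bar> \<le> 1 / (1 - g)" "\<bar>PV g \<sigma> C\<bar> \<le> 1 / (1 - g)"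
proof -
  have "\<bar>A h\<bar> \<le> 1 * B h" for h using A_le_B[of h] A_nonneg[of h] by simp
  then show "\<bar>PV g \<sigma> A\<bar> \<le> 1 / (1 - g)" by (rule PV_bound[OF g])
  have "\<bar>B h\<bar> \<le> 1 * B h" for h using B_nonneg[of h] by simp
  then show "\<bar>PV g \<sigma> B\<bar> \<le> 1 / (1 - g)" by (rule PV_bound[OF g])
  have "\<bar>C h\<bar> \<le> 1 * B h" for h using B_nonneg[of h] by (simp add: C_def)
  then show "\<bar>PV g \<sigma> C\<bar> \<le> 1 / (1 - g)" by (rule PV_bound[OF g])
qed

lemma lin_le: fixes a b M \<alpha> \<beta> :: real
  assumes "\<bar>a\<bar> \<le> M" "\<bar>b\<bar> \<le> M"
  shows "\<alpha> * a - \<beta> * b \<le> \<bar>\<alpha>\<bar> * M + \<bar>\<beta>\<bar> * M"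
proof -
  have "\<alpha> * a \<le> \<bar>\<alpha>\<bar> * M"
    using abs_ge_self[of "\<alpha> * a"] mult_left_mono[OF assms(1) abs_ge_zero[of \<alpha>]] by (simp add: abs_mult)
  moreover have "- (\<beta> * b) \<le> \<bar>\<beta>\<bar> * M"
    using abs_ge_minus_self[of "\<beta> * b"] mult_left_mono[OF assms(2) abs_ge_zero[of \<beta>]] by (simp add: abs_mult)
  ultimately show ?thesis by linarith
qed

lemma term_G: "hprob Q h * (ctr_mean (posterior Q h) - G) = 1 * A h - G * B h"
proof (cases "B h = 0")
  case True
  then have "A h = 0" using A_le_B[of h] A_nonneg[of h] by linarith
  then show ?thesis using True by (simp add: B_def)
next
  case False
  then have "0 < B h" using B_nonneg[of h] by linarith
  then show ?thesis using post_props(2)[of h] by (simp add: B_def[symmetric] field_simps)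
qed

lemma pvG:
  assumes g: "0 \<le> g" "g < 1"
  shows "policy_value g (\<lambda>P. ctr_mean P - G) Q \<sigma> = PV g \<sigma> A - G * PV g \<sigma> B"
  unfolding pv_eq term_G using PV_diff[OF g dom_A dom_B, of \<sigma> 1 G] by simp

lemma term_1:
  "hprob Q h * (v * ctr_mean (posterior Q h) - W * min 1 (ctr_mean (posterior Q h) / gittins 0 (posterior Q h)))
   = v * A h - W * C h"
proof (cases "B h = 0")
  case True
  then have "A h = 0" using A_le_B[of h] A_nonneg[of h] by linarith
  then show ?thesis using True by (simp add: B_def C_def)
next
  case False
  then have Bp: "0 < B h" using B_nonneg[of h] by linarith
  have g0: "gittins 0 (posterior Q h) = A h / B h"
    using gittins0[OF post_props(1)[OF Bp]] post_props(2)[OF Bp] by simp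
  show ?thesis
  proof (cases "A h = 0")
    case True
    then show ?thesis using post_props(2)[OF Bp] g0 by (simp add: C_def)
  next
    case False
    have m: "ctr_mean (posterior Q h) = A h / B h" by (rule post_props(2)[OF Bp])
    have "ctr_mean (posterior Q h) / gittins 0 (posterior Q h) = 1" using g0 m False Bp by simp
    then show ?thesis using Bp False by (simp add: B_def[symmetric] m C_def field_simps)
  qed
qed

lemma pv1:
  assumes g: "0 \<le> g" "g < 1"
  shows "policy_value g (\<lambda>P. v * ctr_mean P - W * min 1 (ctr_mean P / gittins 0 P)) Q \<sigma>
         = v * PV g \<sigma> A - W * PV g \<sigma> C"
  unfolding pv_eq term_1 using PV_diff[OF g dom_A dom_C, of \<sigma> v W] by simp

lemma ne_sig: "{\<sigma>::bool list \<Rightarrow> bool. \<sigma> []} \<noteq> {}"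
proof -
  have "(\<lambda>_. True) \<in> {\<sigma>::bool list \<Rightarrow> bool. \<sigma> []}" by simp
  then show ?thesis by blast
qed

lemma gitt_facts:
  assumes g: "0 \<le> g" "g < 1"
  defines "GS \<equiv> {G. (SUP \<sigma>\<in>{\<sigma>::bool list \<Rightarrow> bool. \<sigma> []}. PV g \<sigma> A - G * PV g \<sigma> B) \<ge> 0}"
  shows "gittins g Q = Sup GS" "A [] \<in> GS" "bdd_above GS" "\<And>G. G \<in> GS \<Longrightarrow> G \<le> 1"
    "A [] \<le> gittins g Q" "A [] = 0 \<Longrightarrow> gittins g Q = 0"
    "\<And>G X. bdd_above ((\<lambda>\<sigma>. PV g \<sigma> A - G * PV g \<sigma> B) ` X)"
proof -
  show git: "gittins g Q = Sup GS" unfolding gittins_def GS_def by (simp add: pvG[OF g])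
  show bddF: "bdd_above ((\<lambda>\<sigma>. PV g \<sigma> A - G * PV g \<sigma> B) ` X)" for G X
  proof (rule bdd_aboveI2)
    fix \<sigma>
    show "PV g \<sigma> A - G * PV g \<sigma> B \<le> \<bar>1\<bar> * (1 / (1 - g)) + \<bar>G\<bar> * (1 / (1 - g))"
      using lin_le[OF PV_le_bound(1)[OF g, of \<sigma>] PV_le_bound(2)[OF g, of \<sigma>], where \<alpha>=1 and \<beta>=G] by simp
  qed
  show le1: "G \<le> 1" if "G \<in> GS" for G
  proof (rule ccontr)
    assume "\<not> G \<le> 1"
    then have G1: "1 < G" by simp
    have "(SUP \<sigma>\<in>{\<sigma>::bool list \<Rightarrow> bool. \<sigma> []}. PV g \<sigma> A - G * PV g \<sigma> B) \<le> 1 - G"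
    proof (rule cSUP_least[OF ne_sig])
      fix \<sigma> :: "bool list \<Rightarrow> bool" assume "\<sigma> \<in> {\<sigma>. \<sigma> []}"
      then have b1: "1 \<le> PV g \<sigma> B" using PV_B_ge1[OF g] by auto
      have "PV g \<sigma> A \<le> PV g \<sigma> B" by (rule PV_mono[OF g dom_A dom_B A_le_B])
      moreover have "(1 - G) * PV g \<sigma> B \<le> (1 - G) * 1" using b1 G1 by (intro mult_left_mono_neg) auto
      ultimately show "PV g \<sigma> A - G * PV g \<sigma> B \<le> 1 - G" by (simp add: algebra_simps)
    qed
    then show False using that G1 unfolding GS_def by simp
  qed
  show bdd: "bdd_above GS" using le1 by (intro bdd_aboveI) auto
  show pin: "A [] \<in> GS"
  proof -
    have "PV g (\<lambda>h. h = []) A - A [] * PV g (\<lambda>h. h = []) B \<le>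
          (SUP \<sigma>\<in>{\<sigma>::bool list \<Rightarrow> bool. \<sigma> []}. PV g \<sigma> A - A [] * PV g \<sigma> B)"
      by (rule cSUP_upper[OF _ bddF]) simp
    then show ?thesis unfolding GS_def by (simp add: PV_single B_Nil)
  qed
  show "A [] \<le> gittins g Q" unfolding git by (rule cSup_upper[OF pin bdd])
  show "gittins g Q = 0" if p0: "A [] = 0"
  proof -
    have A0: "A h = 0" for h using A_mono[of "[]" h] A_nonneg[of h] p0 by simp
    have Az: "A = (\<lambda>_. 0)" by (rule ext) (simp add: A0)
    have PA: "PV g \<sigma> A = 0" for \<sigma> unfolding Az by (simp add: PV_def S_def)
    have "G \<le> 0" if "G \<in> GS" for G
    proof (rule ccontr)
      assume "\<not> G \<le> 0"
      then have G0: "0 < G" by simp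
      have "(SUP \<sigma>\<in>{\<sigma>::bool list \<Rightarrow> bool. \<sigma> []}. PV g \<sigma> A - G * PV g \<sigma> B) \<le> - G"
      proof (rule cSUP_least[OF ne_sig])
        fix \<sigma> :: "bool list \<Rightarrow> bool" assume "\<sigma> \<in> {\<sigma>. \<sigma> []}"
        then have b1: "1 \<le> PV g \<sigma> B" using PV_B_ge1[OF g] by auto
        then show "PV g \<sigma> A - G * PV g \<sigma> B \<le> - G" using G0 PA[of \<sigma>]
          using mult_left_mono[OF b1, of G] by simp
      qed
      then show False using that G0 unfolding GS_def by simp
    qed
    then have "Sup GS \<le> 0" using pin by (intro cSup_least) auto
    moreover have "0 \<le> Sup GS" using cSup_upper[OF pin bdd] p0 by simp
    ultimately show ?thesis unfolding git by simp
  qed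
qed


lemma case1:
  assumes g: "0 \<le> g" "g < 1" and v: "0 \<le> v" and p: "0 < A []"
  shows "Sup {W. (SUP \<sigma>. v * PV g \<sigma> A - W * PV g \<sigma> C) > 0} = v * gittins g Q"
proof -
  define GS where "GS = {G. (SUP \<sigma>\<in>{\<sigma>::bool list \<Rightarrow> bool. \<sigma> []}. PV g \<sigma> A - G * PV g \<sigma> B) \<ge> 0}"
  define F where "F G \<sigma> = PV g \<sigma> A - G * PV g \<sigma> B" for G \<sigma>
  define U where "U W \<sigma> = v * PV g \<sigma> A - W * PV g \<sigma> C" for W \<sigma>
  define WS where "WS = {W. (SUP \<sigma>. U W \<sigma>) > 0}"
  have git: "gittins g Q = Sup GS" unfolding GS_def by (rule gitt_facts(1)[OF g])
  have pin: "A [] \<in> GS" unfolding GS_def by (rule gitt_facts(2)[OF g])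
  have GSbdd: "bdd_above GS" unfolding GS_def by (rule gitt_facts(3)[OF g])
  have GSne: "GS \<noteq> {}" using pin by blast
  have bddF: "bdd_above (F G ` X)" for G X unfolding F_def by (rule gitt_facts(7)[OF g])
  have bddU: "bdd_above (U W ` X)" for W X
  proof (rule bdd_aboveI2)
    fix \<sigma>
    show "U W \<sigma> \<le> \<bar>v\<bar> * (1 / (1 - g)) + \<bar>W\<bar> * (1 / (1 - g))"
      unfolding U_def by (rule lin_le[OF PV_le_bound(1)[OF g, of \<sigma>] PV_le_bound(3)[OF g, of \<sigma>]])
  qed
  have Cnil: "C [] = 1" using p B_Nil by (simp add: C_def)
  have U0: "U W (\<lambda>h. h = []) = v * A [] - W" for W by (simp add: U_def PV_single Cnil)
  have neg: "W \<in> WS" if "W < 0" for W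
  proof -
    have "U W (\<lambda>h. h = []) \<le> (SUP \<sigma>. U W \<sigma>)" by (rule cSUP_upper[OF _ bddU]) simp
    moreover have "0 < U W (\<lambda>h. h = [])"
    proof -
      have "0 \<le> v * A []" using v p by simp
      then show ?thesis unfolding U0 using that by linarith
    qed
    ultimately show ?thesis unfolding WS_def by simp
  qed
  show ?thesis
  proof (cases "v = 0")
    case True
    have "WS = {..<0}"
    proof (intro set_eqI iffI)
      fix W assume "W \<in> WS"
      show "W \<in> {..<0}"
      proof (rule ccontr)
        assume "W \<notin> {..<0}"
        then have W0: "0 \<le> W" by simp
        have "(SUP \<sigma>. U W \<sigma>) \<le> 0"
        proof (rule cSUP_least)
          fix \<sigma>
          have "0 \<le> PV g \<sigma> C" by (rule PV_nonneg[OF g dom_C]) (simp add: C_def B_nonneg)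
          then show "U W \<sigma> \<le> 0" unfolding U_def using True W0 by simp
        qed simp
        then show False using \<open>W \<in> WS\<close> unfolding WS_def by simp
      qed
    qed (use neg in auto)
    then have "Sup WS = 0" by simp
    then show ?thesis unfolding WS_def U_def using True by simp
  next
    case False
    then have vp: "0 < v" using v by simp
    have w1: "W \<le> v * Sup GS" if "W \<in> WS" for W
    proof -
      have "0 < (SUP \<sigma>. U W \<sigma>)" using that unfolding WS_def by simp
      then obtain \<sigma> where s: "0 < U W \<sigma>" using less_cSUP_iff[OF UNIV_not_empty bddU[of W UNIV], of 0] by blast
      define \<sigma>' where "\<sigma>' h = (\<sigma> h \<and> A h \<noteq> 0)" for h
      have pl: "plays \<sigma>' h \<longleftrightarrow> plays \<sigma> h \<and> A h \<noteq> 0" for h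
      proof
        assume "plays \<sigma>' h"
        then have "\<sigma>' (take (length h) h)" unfolding plays_def by blast
        then have "A h \<noteq> 0" by (simp add: \<sigma>'_def)
        moreover have "plays \<sigma> h" using \<open>plays \<sigma>' h\<close> unfolding plays_def \<sigma>'_def by blast
        ultimately show "plays \<sigma> h \<and> A h \<noteq> 0" by simp
      next
        assume a: "plays \<sigma> h \<and> A h \<noteq> 0"
        show "plays \<sigma>' h" unfolding plays_def
        proof (intro allI impI)
          fix i assume "i \<le> length h"
          have "A h \<le> A (take i h)" using A_mono[of "take i h" "drop i h"] by simp
          then have "A (take i h) \<noteq> 0" using a A_nonneg[of h] by linarith
          then show "\<sigma>' (take i h)" using a \<open>i \<le> length h\<close> unfolding plays_def \<sigma>'_def by blast
        qed
      qed
      have tw: "(if plays \<sigma>' h then v * A h - W * B h else 0) = (if plays \<sigma> h then v * A h - W * C h else 0)" for h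
        by (auto simp: pl C_def)
      have "PV g \<sigma>' (\<lambda>h. v * A h - W * B h) = PV g \<sigma> (\<lambda>h. v * A h - W * C h)"
        unfolding PV_def S_def tw ..
      then have e: "v * PV g \<sigma>' A - W * PV g \<sigma>' B = U W \<sigma>"
        unfolding U_def PV_diff[OF g dom_A dom_B] PV_diff[OF g dom_A dom_C] .
      have s': "\<sigma>' []"
      proof (rule ccontr)
        assume "\<not> \<sigma>' []"
        then show False using e s PV_not[of \<sigma>'] by simp
      qed
      have "F (W / v) \<sigma>' = U W \<sigma> / v" unfolding F_def e[symmetric] using vp by (simp add: field_simps)
      then have Fp: "0 < F (W / v) \<sigma>'" using s vp by simp
      have "F (W / v) \<sigma>' \<le> (SUP \<sigma>\<in>{\<sigma>::bool list \<Rightarrow> bool. \<sigma> []}. F (W / v) \<sigma>)"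
        by (rule cSUP_upper[OF _ bddF]) (simp add: s')
      then have "0 \<le> (SUP \<sigma>\<in>{\<sigma>::bool list \<Rightarrow> bool. \<sigma> []}. F (W / v) \<sigma>)" using Fp by linarith
      then have "W / v \<in> GS" unfolding GS_def F_def by simp
      then have "W / v \<le> Sup GS" by (rule cSup_upper[OF _ GSbdd])
      then show ?thesis using vp by (simp add: pos_divide_le_eq mult.commute)
    qed
    have w2: "W \<in> WS" if Wl: "W < v * Sup GS" for W
    proof (cases "W < 0")
      case True then show ?thesis by (rule neg)
    next
      case False
      then have W0: "0 \<le> W" by simp
      have "W / v < Sup GS" using Wl vp by (simp add: pos_divide_less_eq mult.commute)
      then obtain G where G: "G \<in> GS" "W / v < G" using less_cSup_iff[OF GSne GSbdd, of "W / v"] by blast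
      define \<delta> where "\<delta> = G - W / v"
      have dp: "0 < \<delta>" using G by (simp add: \<delta>_def)
      have "0 \<le> (SUP \<sigma>\<in>{\<sigma>::bool list \<Rightarrow> bool. \<sigma> []}. F G \<sigma>)" using G unfolding GS_def F_def by simp
      then have "- \<delta> < (SUP \<sigma>\<in>{\<sigma>::bool list \<Rightarrow> bool. \<sigma> []}. F G \<sigma>)" using dp by linarith
      then obtain \<sigma> where s: "\<sigma> []" "- \<delta> < F G \<sigma>"
        using less_cSUP_iff[OF ne_sig bddF[of G "{\<sigma>. \<sigma> []}"], of "- \<delta>"] by blast
      have b1: "1 \<le> PV g \<sigma> B" using PV_B_ge1[OF g, of \<sigma>] s(1) by simp
      have "F (W / v) \<sigma> = F G \<sigma> + \<delta> * PV g \<sigma> B" unfolding F_def \<delta>_def by (simp add: algebra_simps)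
      moreover have "\<delta> \<le> \<delta> * PV g \<sigma> B" using b1 dp by (simp add: mult_le_cancel_left1)
      ultimately have Fp: "0 < F (W / v) \<sigma>" using s(2) by linarith
      have "PV g \<sigma> C \<le> PV g \<sigma> B" by (rule PV_mono[OF g dom_C dom_B]) (simp add: C_def B_nonneg)
      then have "W * PV g \<sigma> C \<le> W * PV g \<sigma> B" using W0 by (rule mult_left_mono)
      moreover have "v * F (W / v) \<sigma> = v * PV g \<sigma> A - W * PV g \<sigma> B" unfolding F_def using vp by (simp add: field_simps)
      moreover have "0 < v * F (W / v) \<sigma>" using vp Fp by simp
      ultimately have "0 < U W \<sigma>" unfolding U_def by linarith
      moreover have "U W \<sigma> \<le> (SUP \<sigma>. U W \<sigma>)" by (rule cSUP_upper[OF _ bddU]) simp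
      ultimately show ?thesis unfolding WS_def by simp
    qed
    have WSne: "WS \<noteq> {}" using w2[of "v * Sup GS - 1"] by auto
    have "Sup WS = v * Sup GS"
    proof (rule antisym)
      show "Sup WS \<le> v * Sup GS" by (rule cSup_least[OF WSne w1])
      have WSbdd: "bdd_above WS" using w1 by (intro bdd_aboveI) auto
      show "v * Sup GS \<le> Sup WS"
      proof (rule dense_le)
        fix y assume "y < v * Sup GS"
        then have "y \<in> WS" by (rule w2)
        then show "y \<le> Sup WS" by (rule cSup_upper[OF _ WSbdd])
      qed
    qed
    then show ?thesis unfolding WS_def U_def git by simp
  qed
qed

end

lemma opt0_pos: "0 < (SUP \<sigma>::bool list \<Rightarrow> bool. if \<sigma> [] then c else (0::real)) \<longleftrightarrow> 0 < c"
proof -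
  have bdd: "bdd_above ((\<lambda>\<sigma>::bool list \<Rightarrow> bool. if \<sigma> [] then c else (0::real)) ` UNIV)"
    by (intro bdd_aboveI2[where M="max c 0"]) auto
  show ?thesis
  proof
    assume "0 < (SUP \<sigma>::bool list \<Rightarrow> bool. if \<sigma> [] then c else (0::real))"
    then obtain \<sigma> :: "bool list \<Rightarrow> bool" where "0 < (if \<sigma> [] then c else 0)"
      using less_cSUP_iff[OF UNIV_not_empty bdd, of 0] by blast
    then show "0 < c" by (auto split: if_splits)
  next
    assume "0 < c"
    moreover have "(if (\<lambda>_::bool list. True) [] then c else 0) \<le> (SUP \<sigma>::bool list \<Rightarrow> bool. if \<sigma> [] then c else (0::real))"
      by (rule cSUP_upper[OF _ bdd]) simp
    ultimately show "0 < (SUP \<sigma>::bool list \<Rightarrow> bool. if \<sigma> [] then c else (0::real))" by simp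
  qed
qed

theorem theorem5:
  fixes Q :: "real measure" and v \<gamma> \<gamma>a \<gamma>b :: real
  assumes "prob_space Q"
    and "sets Q = sets borel"
    and "AE \<theta> in Q. 0 \<le> \<theta> \<and> \<theta> \<le> 1"
    and "0 \<le> v"
    and "0 \<le> \<gamma>" and "\<gamma> < 1"
    and "(\<gamma>b = \<gamma> \<and> \<gamma>a = 0) \<or> (\<gamma>b = 0 \<and> \<gamma>a = \<gamma>)"
  shows "effective_bid (bidding_index_bid \<gamma>a \<gamma>b v Q) (gittins \<gamma>a Q) = v * gittins \<gamma> Q"
proof -
  interpret ctr Q by (rule ctr.intro[OF assms(1) ctr_axioms.intro[OF assms(2) assms(3)]])
  have g: "0 \<le> \<gamma>" "\<gamma> < 1" using assms(5,6) .
  have pA: "ctr_mean Q = A []" by (simp add: A_eq ctr_mean_def)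
  have hp: "hprob Q [] = 1" using B_Nil by (simp add: B_def)
  show ?thesis
  proof (cases "A [] = 0")
    case True
    have "gittins \<gamma> Q = 0" by (rule gitt_facts(6)[OF g True])
    then show ?thesis using True
      by (simp add: bidding_index_bid_def effective_bid_def pA Let_def)
  next
    case False
    then have p: "0 < A []" using A_nonneg[of "[]"] by linarith
    have qge: "A [] \<le> gittins \<gamma> Q" by (rule gitt_facts(5)[OF g])
    from assms(7) show ?thesis
    proof
      assume c: "\<gamma>b = \<gamma> \<and> \<gamma>a = 0"
      have q0: "gittins 0 Q = A []" using gittins0[OF hp] pA by simp
      have W: "bidding_W 0 \<gamma> v Q = v * gittins \<gamma> Q"
        unfolding bidding_W_def opt_value_def pv1[OF g] by (rule case1[OF g assms(4) p])
      show ?thesis using c p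
        by (simp add: bidding_index_bid_def effective_bid_def Let_def q0 pA W)
    next
      assume c: "\<gamma>b = 0 \<and> \<gamma>a = \<gamma>"
      define q where "q = gittins \<gamma> Q"
      have qp: "0 < q" using qge p unfolding q_def by linarith
      have mn: "min 1 (A [] / q) = A [] / q" using qge p unfolding q_def by (simp add: min_def divide_le_eq_1)
      have set: "{W. 0 < opt_value 0 (\<lambda>P. v * ctr_mean P - W * min 1 (ctr_mean P / gittins \<gamma> P)) Q} = {..<v * q}"
      proof -
        have "0 < opt_value 0 (\<lambda>P. v * ctr_mean P - W * min 1 (ctr_mean P / gittins \<gamma> P)) Q \<longleftrightarrow> W < v * q" for W
        proof -
          have "0 < opt_value 0 (\<lambda>P. v * ctr_mean P - W * min 1 (ctr_mean P / gittins \<gamma> P)) Q \<longleftrightarrow>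
                0 < v * A [] - W * (A [] / q)"
          proof -
            have "opt_value 0 (\<lambda>P. v * ctr_mean P - W * min 1 (ctr_mean P / gittins \<gamma> P)) Q =
                  (SUP \<sigma>::bool list \<Rightarrow> bool. if \<sigma> [] then v * A [] - W * (A [] / q) else 0)"
              unfolding opt_value_def pv0 hp pA q_def[symmetric] mn mult_1_left by (rule refl)
            then show ?thesis using opt0_pos by simp
          qed
          also have "\<dots> \<longleftrightarrow> W * A [] < v * A [] * q" using qp by (simp add: field_simps)
          also have "\<dots> \<longleftrightarrow> W < v * q" using p by (simp add: mult.commute mult.left_commute)
          finally show ?thesis .
        qed
        then show ?thesis by auto
      qed
      have W: "bidding_W \<gamma> 0 v Q = v * q"
        unfolding bidding_W_def set by simp
      have "effective_bid (bidding_index_bid \<gamma> 0 v Q) q = max (v * A []) (v * q)"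
        unfolding bidding_index_bid_def effective_bid_def Let_def q_def[symmetric] W pA mn
        using qp p by simp
      also have "\<dots> = v * q" using qge assms(4) unfolding q_def by (simp add: mult_left_mono max_def)
      finally show ?thesis using c unfolding q_def by simp
    qed
  qed
qed

end
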